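(* Let $c>0$. There is a constant $C=C(c)$ such that the following holds. Let $H=(V,\mathcal{E})$ be a hypergraph with $|V|=n$ whose Delaunay graph is hereditarily $c$-linear, let $k=\max_{e\in\mathcal{E}}|e|$, and let $X=\{\{p,q\}: p,q\in V,\ p\ne q,\ p,q \text{ are friends}\}$. Then $|X|\le C\, n\, \max(k,1)$, i.e. $|X|=O(nk)$.
   Context: A hypergraph $H=(V,\mathcal{E})$ consists of a finite vertex set $V$ and a collection $\mathcal{E}$ of subsets of $V$ (hyperedges). For $S\subseteq V$, the induced subhypergraph is $H|_S=(S,\{e\cap S: e\in\mathcal{E}\})$. The Delaunay graph of a hypergraph $H=(V,\mathcal{E})$ is the graph on vertex set $V$ whose edges are the hyperedges $e\in\mathcal{E}$ with $|e|=2$. $H$ has a hereditarily $c$-linear Delaunay graph if for every nonempty $S\subseteq V$, the Delaunay graph $G_S$ of $H|_S$ satisfies $|E(G_S)|<c\,|S|$. Two vertices $u,v\in V$ are friends if there is some $e\in\mathcal{E}$ with $u,v\in e$. *)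

theory Defs
  imports Complex_Main
begin

definition hypergraph :: "'a set \<Rightarrow> 'a set set \<Rightarrow> bool" where
  "hypergraph V E \<longleftrightarrow> finite V \<and> (\<forall>e\<in>E. e \<subseteq> V)"

definition induced_edges :: "'a set set \<Rightarrow> 'a set \<Rightarrow> 'a set set" where
  "induced_edges E S = {e \<inter> S | e. e \<in> E}"

definition delaunay_edges :: "'a set set \<Rightarrow> 'a set set" where
  "delaunay_edges E = {e \<in> E. card e = 2}"

definition hered_c_linear :: "real \<Rightarrow> 'a set \<Rightarrow> 'a set set \<Rightarrow> bool" where
  "hered_c_linear c V E \<longleftrightarrow>
     (\<forall>S. S \<subseteq> V \<and> S \<noteq> {} \<longrightarrow>
        real (card (delaunay_edges (induced_edges E S))) < c * real (card S))"

definition friends :: "'a set set \<Rightarrow> 'a \<Rightarrow> 'a \<Rightarrow> bool" where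
  "friends E u v \<longleftrightarrow> (\<exists>e\<in>E. u \<in> e \<and> v \<in> e)"

definition max_edge_size :: "'a set set \<Rightarrow> nat" where
  "max_edge_size E = Max (insert 0 (card ` E))"

definition friend_pairs :: "'a set \<Rightarrow> 'a set set \<Rightarrow> 'a set set" where
  "friend_pairs V E = {{p, q} | p q. p \<in> V \<and> q \<in> V \<and> p \<noteq> q \<and> friends E p q}"

end

theory Submission
  imports Defs "HOL-Library.FuncSet"
begin

lemma exp_bound:
  fixes m :: nat assumes "m \<ge> 1"
  shows "real (m+1) ^ (m-1) \<le> exp 1 * real m ^ (m-1)"
proof -
  have mpos: "real m > 0" using assms by simp
  have "1 + 1 / real m \<le> exp (1 / real m)" by (rule exp_ge_add_one_self)
  hence "(1 + 1 / real m) ^ (m-1) \<le> exp (1 / real m) ^ (m-1)"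
    by (rule power_mono) (use mpos in auto)
  also have "\<dots> = exp (real (m-1) * (1 / real m))" by (simp only: exp_of_nat_mult)
  also have "\<dots> \<le> exp 1" using assms mpos by (simp add: field_simps)
  finally have h: "(1 + 1 / real m) ^ (m-1) \<le> exp 1" .
  have "(1 + 1 / real m) = real (m+1) / real m" using mpos by (simp add: field_simps)
  hence "real (m+1) ^ (m-1) / real m ^ (m-1) \<le> exp 1" using h by (simp add: power_divide)
  thus ?thesis using mpos by (simp add: divide_le_eq)
qed

lemma del_le:
  assumes "hypergraph V E" "hered_c_linear c V E" "S \<subseteq> V" "c > 0"
  shows "real (card (delaunay_edges (induced_edges E S))) \<le> c * real (card S)"
proof (cases "S = {}")
  case True
  have "delaunay_edges (induced_edges E S) = {}"
    using True unfolding delaunay_edges_def induced_edges_def by auto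
  thus ?thesis using True by simp
next
  case False
  thus ?thesis using assms unfolding hered_c_linear_def by (meson less_imp_le)
qed

lemma finite_del:
  assumes "hypergraph V E"
  shows "finite (delaunay_edges (induced_edges E S))"
proof -
  have "finite E" using assms unfolding hypergraph_def
    by (meson Pow_iff finite_Pow_iff rev_finite_subset subsetI)
  moreover have "induced_edges E S = (\<lambda>e. e \<inter> S) ` E" unfolding induced_edges_def by auto
  ultimately show ?thesis unfolding delaunay_edges_def by auto
qed

theorem mainTheorem2:
  fixes c :: real
  assumes "c > 0"
  shows "\<exists>C::real. \<forall>(V::nat set) (E::nat set set).
           hypergraph V E \<and> hered_c_linear c V E \<longrightarrow>
           real (card (friend_pairs V E))
             \<le> C * real (card V) * real (max 1 (max_edge_size E))"
proof (intro exI allI impI)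
  fix V :: "nat set" and E :: "nat set set"
  assume H: "hypergraph V E \<and> hered_c_linear c V E"
  hence hyp: "hypergraph V E" and her: "hered_c_linear c V E" by auto
  have finV: "finite V" and sub: "\<And>e. e \<in> E \<Longrightarrow> e \<subseteq> V" using hyp unfolding hypergraph_def by auto
  have finE: "finite E" using finV sub by (meson Pow_iff finite_Pow_iff rev_finite_subset subsetI)
  define X where "X = friend_pairs V E"
  define k where "k = max_edge_size E"
  define n where "n = card V"
  have finfe: "finite (insert 0 (card ` E))" using finE by simp
  have ek: "\<And>e. e \<in> E \<Longrightarrow> card e \<le> k" unfolding k_def max_edge_size_def
    using finfe by (simp add: Max_ge)
  have kn: "k \<le> n" unfolding k_def max_edge_size_def n_def
    using finfe finV sub by (auto simp: card_mono)
  have finX: "finite X"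
  proof -
    have "X \<subseteq> Pow V" unfolding X_def friend_pairs_def by auto
    thus ?thesis using finV by (meson finite_Pow_iff rev_finite_subset)
  qed
  show "real (card (friend_pairs V E)) \<le> c * exp 1 * real (card V) * real (max 1 (max_edge_size E))"
  proof (cases "X = {}")
    case True
    thus ?thesis using assms unfolding X_def by simp
  next
    case False
    have "\<forall>P\<in>X. \<exists>t. P = {fst t, fst (snd t)} \<and> fst t \<noteq> fst (snd t) \<and> fst t \<in> snd (snd t)
        \<and> fst (snd t) \<in> snd (snd t) \<and> snd (snd t) \<in> E"
      unfolding X_def friend_pairs_def friends_def by fastforce
    from bchoice[OF this] obtain g where g: "\<forall>P\<in>X. P = {fst (g P), fst (snd (g P))} \<and> fst (g P) \<noteq> fst (snd (g P))
       \<and> fst (g P) \<in> snd (snd (g P)) \<and> fst (snd (g P)) \<in> snd (snd (g P)) \<and> snd (snd (g P)) \<in> E"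
      by blast
    define u where "u P = fst (g P)" for P
    define v where "v P = fst (snd (g P))" for P
    define e where "e P = snd (snd (g P))" for P
    have g1: "\<And>P. P \<in> X \<Longrightarrow> {u P, v P} = P"
      using g unfolding u_def v_def e_def by simp
    have g': "\<And>P. P \<in> X \<Longrightarrow> u P \<noteq> v P \<and> u P \<in> e P \<and> v P \<in> e P \<and> e P \<in> E"
      using g unfolding u_def v_def e_def by simp
    obtain P0 where P0: "P0 \<in> X" using False by blast
    have ce2: "\<And>P. P \<in> X \<Longrightarrow> card (e P) \<ge> 2"
    proof -
      fix P assume "P \<in> X"
      hence a: "{u P, v P} \<subseteq> e P" "u P \<noteq> v P" "finite (e P)" using g' sub finV
        by (auto intro: rev_finite_subset)
      have "card {u P, v P} = 2" using a(2) by simp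
      thus "card (e P) \<ge> 2" using card_mono[OF a(3) a(1)] by simp
    qed
    have k2: "k \<ge> 2" using ce2[OF P0] ek g'[OF P0] by force
    define F where "F = PiE V (\<lambda>_. {..<k})"
    define Sf where "Sf f = {w \<in> V. f w = (0::nat)}" for f
    define A where "A P = PiE V (\<lambda>x. if x = u P \<or> x = v P then {0} else if x \<in> e P then {1..<k} else {..<k})" for P
    have finF: "finite F" unfolding F_def using finV by (simp add: finite_PiE)
    have AF: "\<And>P. A P \<subseteq> F"
    proof
      fix P f assume f: "f \<in> A P"
      have "f i \<in> {..<k}" if "i \<in> V" for i
      proof -
        have "f i \<in> (if i = u P \<or> i = v P then {0} else if i \<in> e P then {1..<k} else {..<k})"
          using f that unfolding A_def PiE_iff by blast
        thus ?thesis using k2 by (auto split: if_splits)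
      qed
      thus "f \<in> F" using f unfolding A_def F_def PiE_iff by blast
    qed
    have cardA: "card (A P) \<ge> (k-1)^(k-2) * k^(n-k)" if P: "P \<in> X" for P
    proof -
      let ?h = "\<lambda>x. card (if x = u P \<or> x = v P then {0::nat} else if x \<in> e P then {1..<k} else {..<k})"
      have eV: "e P \<subseteq> V" using g'[OF P] sub by auto
      have fe: "finite (e P)" using eV finV by (meson rev_finite_subset)
      have uv: "{u P, v P} \<subseteq> e P" using g'[OF P] by auto
      have "card (A P) = prod ?h V" unfolding A_def using finV by (simp add: card_PiE)
      also have "\<dots> = prod ?h (V - e P) * prod ?h (e P)" using prod.subset_diff[OF eV finV] .
      also have "prod ?h (V - e P) = k ^ (n - card (e P))"
      proof -
        have "prod ?h (V - e P) = prod (\<lambda>_. k) (V - e P)"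
          by (rule prod.cong) (use g'[OF P] in auto)
        thus ?thesis using eV fe by (simp add: card_Diff_subset n_def)
      qed
      also have "prod ?h (e P) = prod ?h (e P - {u P, v P}) * prod ?h {u P, v P}"
        using prod.subset_diff[OF uv fe] .
      also have "prod ?h {u P, v P} = 1" using g'[OF P] by simp
      also have "prod ?h (e P - {u P, v P}) = (k-1) ^ (card (e P) - 2)"
      proof -
        have "prod ?h (e P - {u P, v P}) = prod (\<lambda>_. k-1) (e P - {u P, v P})"
          by (rule prod.cong) auto
        moreover have "card (e P - {u P, v P}) = card (e P) - 2"
          using uv fe g'[OF P] by (simp add: card_Diff_subset)
        ultimately show ?thesis by simp
      qed
      finally have cA: "card (A P) = k ^ (n - card (e P)) * ((k - 1) ^ (card (e P) - 2))" by simp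
      have ce: "card (e P) \<le> k" "card (e P) \<ge> 2" using ek g'[OF P] ce2[OF P] by auto
      have "(k-1)^(k-2) * k^(n-k) = (k-1)^(card (e P) - 2) * (k-1)^(k - card (e P)) * k^(n-k)"
        using ce by (simp add: power_add[symmetric])
      also have "\<dots> \<le> (k-1)^(card (e P) - 2) * k^(k - card (e P)) * k^(n-k)"
        by (intro mult_le_mono order.refl power_mono) auto
      also have "\<dots> = (k-1)^(card (e P) - 2) * k^(n - card (e P))"
        using ce kn by (simp add: mult.assoc power_add[symmetric])
      finally show ?thesis using cA by (simp add: mult.commute)
    qed
    have inDel: "P \<in> delaunay_edges (induced_edges E (Sf f))" if P: "P \<in> X" and f: "f \<in> A P" for P f
    proof -
      have "e P \<inter> Sf f = {u P, v P}"
      proof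
        show "e P \<inter> Sf f \<subseteq> {u P, v P}"
        proof
          fix w assume w: "w \<in> e P \<inter> Sf f"
          hence "w \<in> V" "f w = 0" unfolding Sf_def by auto
          show "w \<in> {u P, v P}"
          proof (rule ccontr)
            assume "w \<notin> {u P, v P}"
            hence "f w \<in> {1..<k}" using f w \<open>w \<in> V\<close> unfolding A_def by (auto simp: PiE_iff)
            thus False using \<open>f w = 0\<close> by simp
          qed
        qed
        show "{u P, v P} \<subseteq> e P \<inter> Sf f"
        proof -
          have uV: "u P \<in> V" "v P \<in> V" using g'[OF P] sub by auto
          have "f (u P) \<in> {0}" "f (v P) \<in> {0}"
            using f uV unfolding A_def PiE_iff by (metis (no_types, lifting))+
          thus ?thesis using uV g'[OF P] unfolding Sf_def by auto
        qed
      qed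
      hence "P \<in> induced_edges E (Sf f)" using g'[OF P] g1[OF P] unfolding induced_edges_def by auto
      moreover have "card P = 2" using g'[OF P] g1[OF P] by (metis card_2_iff)
      ultimately show ?thesis unfolding delaunay_edges_def by auto
    qed
    have "(\<Sum>P\<in>X. card (A P)) = (\<Sum>P\<in>X. card {f \<in> F. f \<in> A P})"
    proof (intro sum.cong refl)
      fix P show "card (A P) = card {f \<in> F. f \<in> A P}" using AF[of P] by (simp add: Collect_conj_eq Int_absorb1)
    qed
    also have "\<dots> = (\<Sum>P\<in>X. \<Sum>f\<in>{f \<in> F. f \<in> A P}. 1)" by simp
    also have "\<dots> = (\<Sum>f\<in>F. \<Sum>P\<in>{P \<in> X. f \<in> A P}. 1)" using sum.swap_restrict[OF finX finF, of "\<lambda>_ _. 1::nat" "\<lambda>P f. f \<in> A P"] by simp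
    also have "\<dots> = (\<Sum>f\<in>F. card {P \<in> X. f \<in> A P})" by simp
    also have "\<dots> \<le> (\<Sum>f\<in>F. card (delaunay_edges (induced_edges E (Sf f))))"
      by (intro sum_mono card_mono finite_del[OF hyp]) (auto intro: inDel)
    finally have dc1: "(\<Sum>P\<in>X. card (A P)) \<le> (\<Sum>f\<in>F. card (delaunay_edges (induced_edges E (Sf f))))" .
    have sS: "(\<Sum>f\<in>F. card (Sf f)) = n * k^(n-1)"
    proof -
      have "(\<Sum>f\<in>F. card (Sf f)) = (\<Sum>f\<in>F. \<Sum>w\<in>{w \<in> V. f w = 0}. 1)" unfolding Sf_def by simp
      also have "\<dots> = (\<Sum>w\<in>V. \<Sum>f\<in>{f \<in> F. f w = 0}. 1)" using sum.swap_restrict[OF finF finV, of "\<lambda>_ _. 1::nat" "\<lambda>f w. f w = 0"] by simp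
      also have "\<dots> = (\<Sum>w\<in>V. k^(n-1))"
      proof (rule sum.cong[OF refl])
        fix w assume w: "w \<in> V"
        have "{f \<in> F. f w = 0} = PiE V (\<lambda>x. if x = w then {0} else {..<k})"
        proof (intro set_eqI iffI)
          fix f assume "f \<in> {f \<in> F. f w = 0}"
          hence f1: "\<forall>i\<in>V. f i < k" "f \<in> extensional V" "f w = 0" unfolding F_def PiE_iff by auto
          show "f \<in> PiE V (\<lambda>x. if x = w then {0} else {..<k})" unfolding PiE_iff using f1 by auto
        next
          fix f assume "f \<in> PiE V (\<lambda>x. if x = w then {0} else {..<k})"
          hence f2: "\<forall>i\<in>V. f i \<in> (if i = w then {0} else {..<k})" "f \<in> extensional V"
            unfolding PiE_iff by auto
          have fw: "f w = 0" using f2(1) w by force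
          have "f i < k" if "i \<in> V" for i
          proof -
            have "f i \<in> (if i = w then {0} else {..<k})" using f2(1) that by blast
            thus ?thesis using k2 by (auto split: if_splits)
          qed
          thus "f \<in> {f \<in> F. f w = 0}" using fw f2(2) unfolding F_def PiE_iff by auto
        qed
        hence "card {f \<in> F. f w = 0} = (\<Prod>x\<in>V. card (if x = w then {0::nat} else {..<k}))"
          using finV by (simp add: card_PiE)
        also have "\<dots> = card (if w = w then {0::nat} else {..<k}) * (\<Prod>x\<in>V - {w}. card (if x = w then {0::nat} else {..<k}))"
          using prod.remove[OF finV w] .
        also have "(\<Prod>x\<in>V - {w}. card (if x = w then {0::nat} else {..<k})) = (\<Prod>x\<in>V - {w}. k)"
          by (rule prod.cong) auto
        finally show "(\<Sum>f\<in>{f \<in> F. f w = 0}. 1) = k^(n-1)" using finV w by (simp add: n_def)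
      qed
      finally show ?thesis by (simp add: n_def)
    qed
    have dc2: "real (\<Sum>f\<in>F. card (delaunay_edges (induced_edges E (Sf f)))) \<le> c * real (n * k^(n-1))"
    proof -
      have "real (\<Sum>f\<in>F. card (delaunay_edges (induced_edges E (Sf f))))
           = (\<Sum>f\<in>F. real (card (delaunay_edges (induced_edges E (Sf f)))))" by simp
      also have "\<dots> \<le> (\<Sum>f\<in>F. c * real (card (Sf f)))"
        by (intro sum_mono del_le[OF hyp her _ assms]) (auto simp: Sf_def)
      also have "\<dots> = c * real (\<Sum>f\<in>F. card (Sf f))" by (simp add: sum_distrib_left)
      finally show ?thesis using sS by simp
    qed
    define B where "B = (k-1)^(k-2) * k^(n-k)"
    have "card X * B \<le> (\<Sum>P\<in>X. card (A P))"
      using sum_mono[of X "\<lambda>_. B" "\<lambda>P. card (A P)"] cardA unfolding B_def by simp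
    hence main: "real (card X) * real B \<le> c * real (n * k^(n-1))"
    proof -
      have "card X * B \<le> (\<Sum>f\<in>F. card (delaunay_edges (induced_edges E (Sf f))))"
        using dc1 \<open>card X * B \<le> (\<Sum>P\<in>X. card (A P))\<close> by linarith
      hence "real (card X * B) \<le> real (\<Sum>f\<in>F. card (delaunay_edges (induced_edges E (Sf f))))"
        by (simp only: of_nat_le_iff)
      thus ?thesis using dc2 by simp
    qed
    have Bpos: "real B > 0" unfolding B_def using k2 by simp
    have eb: "real k ^ (k-2) \<le> exp 1 * real (k-1) ^ (k-2)"
    proof -
      have eb0: "real (k-1+1) ^ (k-1-1) \<le> exp 1 * real (k-1) ^ (k-1-1)"
        by (rule exp_bound) (use k2 in simp)
      have q: "k-1+1 = k" "k-1-1 = k-2" using k2 by auto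
      show ?thesis using eb0 unfolding q .
    qed
    have "c * real (n * k^(n-1)) = c * real n * real k * (real k ^ (k-2) * real k^(n-k))"
    proof -
      have "n - 1 = 1 + (k-2) + (n-k)" using k2 kn by simp
      hence "real k ^ (n-1) = real k * (real k ^ (k-2) * real k^(n-k))" by (metis power_add power_one_right mult.assoc)
      thus ?thesis by simp
    qed
    also have "\<dots> \<le> c * real n * real k * (exp 1 * real (k-1) ^ (k-2) * real k^(n-k))"
      using eb assms by (intro mult_left_mono mult_right_mono) auto
    also have "\<dots> = (c * exp 1 * real n * real k) * real B"
      unfolding B_def using k2 by (simp add: of_nat_diff)
    finally have "real (card X) * real B \<le> (c * exp 1 * real n * real k) * real B" using main by linarith
    hence "real (card X) \<le> c * exp 1 * real n * real k" using Bpos by simp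
    moreover have "max 1 k = k" using k2 by simp
    ultimately show ?thesis unfolding X_def n_def k_def by simp
  qed
qed

end
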